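(* Let $(A(n))_{n\ge1}$ be an i.i.d. sequence of random topical operators on $\mathbb R^d$, and let $a,b\in\mathbb R$. Suppose there is $\theta_1\in Top_d$ of rank 1 such that for every $A\in S_A$ and every $\theta'\in T_A$ of rank 1, $$(\theta_1A\theta'-\theta_1\theta')(\mathbb R^d)\subset(a+b\mathbb Z)\mathbf 1.$$ Then every $\theta\in T_A$ of rank 1 satisfies $(\theta A\theta'-\theta\theta')(\mathbb R^d)\subset(a+b\mathbb Z)\mathbf 1$ for every $A\in S_A$ and every $\theta'\in T_A$ of rank 1.
   Context: A map $A:\mathbb R^d\to\mathbb R^d$ is topical if it is isotone ($x\le y$ coordinatewise implies $Ax\le Ay$) and additively homogeneous ($A(x+a\mathbf 1)=Ax+a\mathbf 1$, $\mathbf 1=(1,\dots,1)'$). $Top_d$ is the set of topical operators with the topology of uniform convergence on compact sets. For $x\in\mathbb R^d$, $\bar x$ is its class modulo $\mathbb R\mathbf 1$. $A$ has rank 1 if $\overline{Ax}$ does not depend on $x$. $S_A$ is the support of the law of $A(1)$ in $Top_d$ and $T_A$ the semigroup generated by $S_A$ under composition. *)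

theory Defs
  imports "HOL-Probability.Probability"
begin

definition one_vec :: "real ^ 'd" where
  "one_vec = (\<chi> i. 1)"

definition topical :: "(real ^ 'd \<Rightarrow> real ^ 'd) \<Rightarrow> bool" where
  "topical F \<longleftrightarrow>
     (\<forall>x y. (\<forall>i. x $ i \<le> y $ i) \<longrightarrow> (\<forall>i. F x $ i \<le> F y $ i)) \<and>
     (\<forall>x a. F (x + a *\<^sub>R one_vec) = F x + a *\<^sub>R one_vec)"

text \<open>Rank 1: the class of F x modulo the line spanned by one_vec does not depend on x.\<close>
definition rank1 :: "(real ^ 'd \<Rightarrow> real ^ 'd) \<Rightarrow> bool" where
  "rank1 F \<longleftrightarrow> (\<forall>x y. \<exists>t::real. F x - F y = t *\<^sub>R one_vec)"

text \<open>Measurable space on maps R^d -> R^d (product sigma-algebra); on topical maps it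
  coincides with the Borel sigma-algebra of uniform convergence on compacts.\<close>
definition op_space :: "(real ^ 'd \<Rightarrow> real ^ 'd) measure" where
  "op_space = Pi\<^sub>M UNIV (\<lambda>_. borel)"

definition op_support :: "'w measure \<Rightarrow> ('w \<Rightarrow> real ^ 'd \<Rightarrow> real ^ 'd)
    \<Rightarrow> (real ^ 'd \<Rightarrow> real ^ 'd) set" where
  "op_support M X = {F. topical F \<and>
     (\<forall>K e. compact K \<and> e > 0 \<longrightarrow>
        measure M {\<omega> \<in> space M. \<forall>x\<in>K. dist (X \<omega> x) (F x) < e} > 0)}"

inductive_set gen_semigroup :: "('a \<Rightarrow> 'a) set \<Rightarrow> ('a \<Rightarrow> 'a) set" for S where
  base: "F \<in> S \<Longrightarrow> F \<in> gen_semigroup S"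
| comp: "F \<in> gen_semigroup S \<Longrightarrow> G \<in> gen_semigroup S \<Longrightarrow> F \<circ> G \<in> gen_semigroup S"

definition lattice_line :: "real \<Rightarrow> real \<Rightarrow> (real ^ 'd) set" where
  "lattice_line a b = {(a + b * of_int k) *\<^sub>R one_vec | k. True}"

end

theory Submission
  imports Defs
begin

lemma topical_hom: "topical F \<Longrightarrow> F (x + a *\<^sub>R one_vec) = F x + a *\<^sub>R one_vec"
  unfolding topical_def by blast

definition homog :: "(real ^ 'd \<Rightarrow> real ^ 'd) \<Rightarrow> bool" where
  "homog F \<longleftrightarrow> (\<forall>x a. F (x + a *\<^sub>R one_vec) = F x + a *\<^sub>R one_vec)"

lemma gen_homog:
  assumes "G \<in> gen_semigroup S" "\<And>F. F \<in> S \<Longrightarrow> topical F"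
  shows "homog G"
  using assms(1)
proof induction
  case (base F) then show ?case using assms(2) topical_hom unfolding homog_def by blast
next
  case (comp F G) then show ?case unfolding homog_def by simp
qed

lemma rank1_comp:
  assumes "homog G" "rank1 T" shows "rank1 (G \<circ> T)"
  unfolding rank1_def
proof (intro allI)
  fix x y
  obtain t where t: "T x - T y = t *\<^sub>R one_vec" using assms(2) unfolding rank1_def by blast
  have "T x = T y + t *\<^sub>R one_vec" using t by (simp add: algebra_simps)
  then have "(G \<circ> T) x = (G \<circ> T) y + t *\<^sub>R one_vec" using assms(1) unfolding homog_def by simp
  then show "\<exists>t. (G \<circ> T) x - (G \<circ> T) y = t *\<^sub>R one_vec" by (intro exI[of _ t]) simp
qed

theorem lemma3p2:
  fixes M :: "'w measure"
    and A :: "nat \<Rightarrow> 'w \<Rightarrow> real ^ 'd \<Rightarrow> real ^ 'd"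
    and a b :: real
    and \<theta>1 :: "real ^ 'd \<Rightarrow> real ^ 'd"
  assumes "prob_space M"
    and "\<And>n \<omega>. n \<ge> 1 \<Longrightarrow> \<omega> \<in> space M \<Longrightarrow> topical (A n \<omega>)"
    and "\<And>n. n \<ge> 1 \<Longrightarrow> A n \<in> measurable M op_space"
    and "prob_space.indep_vars M (\<lambda>_. op_space) A {1..}"
    and "\<And>n. n \<ge> 1 \<Longrightarrow> distr M op_space (A n) = distr M op_space (A 1)"
    and "topical \<theta>1" and "rank1 \<theta>1"
    and "\<And>F \<theta>'. F \<in> op_support M (A 1) \<Longrightarrow> \<theta>' \<in> gen_semigroup (op_support M (A 1))
           \<Longrightarrow> rank1 \<theta>' \<Longrightarrow> \<forall>x. \<theta>1 (F (\<theta>' x)) - \<theta>1 (\<theta>' x) \<in> lattice_line a b"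
  shows "\<forall>\<theta> \<in> gen_semigroup (op_support M (A 1)). rank1 \<theta> \<longrightarrow>
           (\<forall>F \<in> op_support M (A 1). \<forall>\<theta>' \<in> gen_semigroup (op_support M (A 1)).
              rank1 \<theta>' \<longrightarrow> (\<forall>x. \<theta> (F (\<theta>' x)) - \<theta> (\<theta>' x) \<in> lattice_line a b))"
proof -
  define S where "S = op_support M (A 1)"
  have topS: "\<And>F. F \<in> S \<Longrightarrow> topical F" unfolding S_def op_support_def by blast
  have hyp: "\<And>F T x. F \<in> S \<Longrightarrow> T \<in> gen_semigroup S \<Longrightarrow> rank1 T \<Longrightarrow>
      \<exists>k::int. \<theta>1 (F (T x)) - \<theta>1 (T x) = (a + b * of_int k) *\<^sub>R one_vec"
    using assms(8) unfolding S_def lattice_line_def by blast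
  have key: "\<exists>n::int. \<forall>T x. T \<in> gen_semigroup S \<longrightarrow> rank1 T \<longrightarrow>
      (\<exists>k::int. \<theta>1 (G (T x)) - \<theta>1 (T x) = (of_int n * a + b * of_int k) *\<^sub>R one_vec)"
    if "G \<in> gen_semigroup S" for G
    using that
  proof induction
    case (base F)
    then show ?case using hyp by (metis (no_types, lifting) mult_1 of_int_1)
  next
    case (comp F G)
    obtain n1 where n1: "\<forall>T x. T \<in> gen_semigroup S \<longrightarrow> rank1 T \<longrightarrow>
      (\<exists>k::int. \<theta>1 (F (T x)) - \<theta>1 (T x) = (of_int n1 * a + b * of_int k) *\<^sub>R one_vec)"
      using comp.IH(1) by blast
    obtain n2 where n2: "\<forall>T x. T \<in> gen_semigroup S \<longrightarrow> rank1 T \<longrightarrow>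
      (\<exists>k::int. \<theta>1 (G (T x)) - \<theta>1 (T x) = (of_int n2 * a + b * of_int k) *\<^sub>R one_vec)"
      using comp.IH(2) by blast
    show ?case
    proof (rule exI[of _ "n1 + n2"], intro allI impI)
      fix T x assume T: "T \<in> gen_semigroup S" "rank1 T"
      have GT: "G \<circ> T \<in> gen_semigroup S" using comp.hyps(2) T(1) by (rule gen_semigroup.comp)
      have rGT: "rank1 (G \<circ> T)" using rank1_comp[OF gen_homog[OF comp.hyps(2) topS] T(2)] .
      obtain k1 where k1: "\<theta>1 (F ((G \<circ> T) x)) - \<theta>1 ((G \<circ> T) x) = (of_int n1 * a + b * of_int k1) *\<^sub>R one_vec"
        using n1 GT rGT by blast
      obtain k2 where k2: "\<theta>1 (G (T x)) - \<theta>1 (T x) = (of_int n2 * a + b * of_int k2) *\<^sub>R one_vec"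
        using n2 T by blast
      have "\<theta>1 ((F \<circ> G) (T x)) - \<theta>1 (T x) = (\<theta>1 (F ((G \<circ> T) x)) - \<theta>1 ((G \<circ> T) x)) + (\<theta>1 (G (T x)) - \<theta>1 (T x))"
        by simp
      also have "\<dots> = (of_int n1 * a + b * of_int k1) *\<^sub>R one_vec + (of_int n2 * a + b * of_int k2) *\<^sub>R one_vec"
        using k1 k2 by simp
      also have "\<dots> = ((of_int n1 * a + b * of_int k1) + (of_int n2 * a + b * of_int k2)) *\<^sub>R one_vec"
        by (rule scaleR_left_distrib[symmetric])
      also have "(of_int n1 * a + b * of_int k1) + (of_int n2 * a + b * of_int k2) = of_int (n1 + n2) * a + b * of_int (k1 + k2)"
        by (simp add: algebra_simps)
      finally have "\<theta>1 ((F \<circ> G) (T x)) - \<theta>1 (T x) = (of_int (n1 + n2) * a + b * of_int (k1 + k2)) *\<^sub>R one_vec" .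
      then show "\<exists>k::int. \<theta>1 ((F \<circ> G) (T x)) - \<theta>1 (T x) = (of_int (n1 + n2) * a + b * of_int k) *\<^sub>R one_vec"
        by blast
    qed
  qed
  show ?thesis
    unfolding S_def[symmetric]
  proof (intro ballI impI allI)
    fix \<theta> F \<theta>' x
    assume th: "\<theta> \<in> gen_semigroup S" "rank1 \<theta>" and F: "F \<in> S"
      and th': "\<theta>' \<in> gen_semigroup S" "rank1 \<theta>'"
    obtain n where n: "\<forall>T x. T \<in> gen_semigroup S \<longrightarrow> rank1 T \<longrightarrow>
      (\<exists>k::int. \<theta>1 (\<theta> (T x)) - \<theta>1 (T x) = (of_int n * a + b * of_int k) *\<^sub>R one_vec)"
      using key[OF th(1)] by blast
    have FT: "F \<circ> \<theta>' \<in> gen_semigroup S"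
      using gen_semigroup.base[OF F] th'(1) by (rule gen_semigroup.comp)
    have rFT: "rank1 (F \<circ> \<theta>')"
      using rank1_comp[OF gen_homog[OF gen_semigroup.base[OF F] topS] th'(2)] .
    obtain k1 where k1: "\<theta>1 (\<theta> ((F \<circ> \<theta>') x)) - \<theta>1 ((F \<circ> \<theta>') x) = (of_int n * a + b * of_int k1) *\<^sub>R one_vec"
      using n FT rFT by blast
    obtain k2 where k2: "\<theta>1 (\<theta> (\<theta>' x)) - \<theta>1 (\<theta>' x) = (of_int n * a + b * of_int k2) *\<^sub>R one_vec"
      using n th' by blast
    obtain k3 where k3: "\<theta>1 (F (\<theta>' x)) - \<theta>1 (\<theta>' x) = (a + b * of_int k3) *\<^sub>R one_vec"
      using hyp[OF F th'] by blast
    obtain t where t: "\<theta> (F (\<theta>' x)) - \<theta> (\<theta>' x) = t *\<^sub>R one_vec"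
      using th(2) unfolding rank1_def by blast
    have "\<theta> (F (\<theta>' x)) = \<theta> (\<theta>' x) + t *\<^sub>R one_vec" using t by (simp add: algebra_simps)
    then have e: "\<theta>1 (\<theta> (F (\<theta>' x))) = \<theta>1 (\<theta> (\<theta>' x)) + t *\<^sub>R one_vec"
      using topical_hom[OF assms(6)] by simp
    have "t *\<^sub>R one_vec = \<theta>1 (\<theta> (F (\<theta>' x))) - \<theta>1 (\<theta> (\<theta>' x))" using e by simp
    also have "\<dots> = (\<theta>1 (\<theta> ((F \<circ> \<theta>') x)) - \<theta>1 ((F \<circ> \<theta>') x)) - (\<theta>1 (\<theta> (\<theta>' x)) - \<theta>1 (\<theta>' x)) + (\<theta>1 (F (\<theta>' x)) - \<theta>1 (\<theta>' x))"
      by simp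
    also have "\<dots> = (of_int n * a + b * of_int k1) *\<^sub>R one_vec - (of_int n * a + b * of_int k2) *\<^sub>R one_vec + (a + b * of_int k3) *\<^sub>R one_vec"
      using k1 k2 k3 by simp
    also have "\<dots> = ((of_int n * a + b * of_int k1) - (of_int n * a + b * of_int k2) + (a + b * of_int k3)) *\<^sub>R one_vec"
      by (simp only: scaleR_left_distrib scaleR_left_diff_distrib)
    also have "(of_int n * a + b * of_int k1) - (of_int n * a + b * of_int k2) + (a + b * of_int k3) = a + b * of_int (k1 - k2 + k3)"
      by (simp add: algebra_simps)
    finally have "\<theta> (F (\<theta>' x)) - \<theta> (\<theta>' x) = (a + b * of_int (k1 - k2 + k3)) *\<^sub>R one_vec"
      using t by simp
    then show "\<theta> (F (\<theta>' x)) - \<theta> (\<theta>' x) \<in> lattice_line a b"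
      unfolding lattice_line_def by blast
  qed
qed

end
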